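(* Let $G=\mathrm{Sl}(2,\mathbb R)$ acting on $\mathbb P^1$, let $W=\{(a,b)\in\mathbb R^2: a\ge0,\ |b|\le a\}$ and $S_W=\{g\in\mathrm{Sl}(2,\mathbb R): gW\subset W\}$. The core of the invariant control set of $S_W$ in $\mathbb P^1$ is $C_0=\{[(a,b)]:(a,b)\in\mathrm{int}W\}$. For $g\in\mathrm{Sl}(2,\mathbb R)$ and $0\ne z\in\mathbb R^2$ let $\rho(g,[z])=\|gz\|/\|z\|$ (Euclidean norm). Then: (i) $\|g(1,0)\|\ge 1/2$ for all $g\in S_W$; (ii) for every $z\in C_0$ there is $h\in S_W$ with $z=h[(1,0)]$ and $\rho(g,z)\ge 1/(2\|h\|)$ for all $g\in S_W$ (where $\|h\|$ is the operator norm), so $\inf_{g\in S_W}\rho(g,z)>0$; (iii) nevertheless $\inf\{\rho(g,z): g\in S_W,\ z\in C_0\}=0$, i.e. no lower bound uniform in $z\in C_0$ exists.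
   Context: Here $\rho(g,[z])=\|gz\|/\|z\|$ is the cocycle $\rho_\lambda$ for $\mathrm{Sl}(2,\mathbb R)$ associated with the functional $\lambda$ on the diagonal subalgebra satisfying $\lambda(\mathrm{diag}(1,-1))=1$. The invariant control set of $S_W$ is the unique maximal subset $D\subset\mathbb P^1$ with nonempty interior, $D\subset\mathrm{cl}(S_Wx)$ for all $x\in D$, and $S_WD\subset D$; its core is the set of its points fixed by some element of $\mathrm{int}S_W$. *)

theory Defs
  imports "HOL-Analysis.Analysis"
begin

definition SL2 :: "(real^2^2) set" where
  "SL2 = {g. det g = 1}"

definition Wcone :: "(real^2) set" where
  "Wcone = {x. x $ 1 \<ge> 0 \<and> \<bar>x $ 2\<bar> \<le> x $ 1}"

definition SW :: "(real^2^2) set" where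
  "SW = {g \<in> SL2. (\<lambda>x. g *v x) ` Wcone \<subseteq> Wcone}"

definition proj :: "real^2 \<Rightarrow> (real^2) set" where
  "proj z = {c *\<^sub>R z | c. c \<noteq> 0}"

definition P1 :: "(real^2) set set" where
  "P1 = {proj z | z. z \<noteq> 0}"

definition P1_top :: "(real^2) set topology" where
  "P1_top = topology (\<lambda>U. U \<subseteq> P1 \<and> open {z. z \<noteq> 0 \<and> proj z \<in> U})"

text \<open>Action of a matrix on P1 (well defined for invertible g).\<close>
definition act :: "real^2^2 \<Rightarrow> (real^2) set \<Rightarrow> (real^2) set" where
  "act g p = (\<lambda>x. g *v x) ` p"

definition orbit :: "(real^2^2) set \<Rightarrow> (real^2) set \<Rightarrow> (real^2) set set" where
  "orbit S p = {act g p | g. g \<in> S}"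

definition ics_candidate :: "(real^2^2) set \<Rightarrow> (real^2) set set \<Rightarrow> bool" where
  "ics_candidate S D \<longleftrightarrow> D \<subseteq> P1 \<and> P1_top interior_of D \<noteq> {}
     \<and> (\<forall>x\<in>D. D \<subseteq> P1_top closure_of (orbit S x))
     \<and> (\<forall>g\<in>S. \<forall>x\<in>D. act g x \<in> D)"

definition invariant_control_set :: "(real^2^2) set \<Rightarrow> (real^2) set set \<Rightarrow> bool" where
  "invariant_control_set S D \<longleftrightarrow> ics_candidate S D
     \<and> (\<forall>D'. ics_candidate S D' \<and> D \<subseteq> D' \<longrightarrow> D' = D)"

definition core :: "(real^2^2) set \<Rightarrow> (real^2) set set \<Rightarrow> (real^2) set set" where
  "core S D = {x \<in> D. \<exists>g \<in> (top_of_set SL2) interior_of S. act g x = x}"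

definition C0 :: "(real^2) set set" where
  "C0 = proj ` interior Wcone"

definition rho :: "real^2^2 \<Rightarrow> real^2 \<Rightarrow> real" where
  "rho g z = norm (g *v z) / norm z"

definition e1 :: "real^2" where
  "e1 = vector [1, 0]"

end

theory Submission
  imports Defs
begin


lemma mv1: "((A::real^2^2) *v x) $ 1 = A$1$1 * x$1 + A$1$2 * x$2"
  by (simp add: matrix_vector_mult_def sum_2)
lemma mv2: "((A::real^2^2) *v x) $ 2 = A$2$1 * x$1 + A$2$2 * x$2"
  by (simp add: matrix_vector_mult_def sum_2)

lemma vec2_eq: "(x::real^2) = y \<longleftrightarrow> x$1 = y$1 \<and> x$2 = y$2"
  by (simp add: vec_eq_iff forall_2)

definition mat2 :: "real \<Rightarrow> real \<Rightarrow> real \<Rightarrow> real \<Rightarrow> real^2^2" where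
  "mat2 a b c d = vector [vector [a,b], vector [c,d]]"

lemma mat2_comp[simp]: "mat2 a b c d $1$1 = a" "mat2 a b c d $1$2 = b"
  "mat2 a b c d $2$1 = c" "mat2 a b c d $2$2 = d"
  by (simp_all add: mat2_def)

lemma det_mat2[simp]: "det (mat2 a b c d) = a*d - b*c"
  by (simp add: det_2)

lemma W_iff: "x \<in> Wcone \<longleftrightarrow> 0 \<le> x$1 \<and> \<bar>x$2\<bar> \<le> x$1"
  by (simp add: Wcone_def)

definition Iset :: "(real^2) set" where "Iset = {x. \<bar>x$2\<bar> < x$1}"

lemma open_Iset: "open Iset"
  unfolding Iset_def
  by (intro open_Collect_less continuous_intros)

lemma closed_W: "closed Wcone"
  unfolding Wcone_def
  by (intro closed_Collect_conj closed_Collect_le continuous_intros)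

lemma Iset_sub: "Iset \<subseteq> Wcone" unfolding Iset_def Wcone_def by auto

lemma interior_W: "interior Wcone = Iset"
proof
  show "Iset \<subseteq> interior Wcone" using open_Iset Iset_sub by (simp add: interior_maximal)
next
  show "interior Wcone \<subseteq> Iset"
  proof
    fix x assume x: "x \<in> interior Wcone"
    then obtain e where e: "e > 0" "ball x e \<subseteq> Wcone" using open_contains_ball interior_subset
      by (meson open_interior subsetD subset_trans)
    have xW: "x \<in> Wcone" using x interior_subset by auto
    show "x \<in> Iset"
    proof (rule ccontr)
      assume "x \<notin> Iset"
      then have eq: "\<bar>x$2\<bar> = x$1" using xW by (auto simp: Iset_def W_iff)
      define s where "s = (if x$2 \<ge> 0 then 1 else -1::real)"
      define y where "y = x + vector [0, s * e/2]"
      have "dist x y = norm (vector [0, s*e/2] :: real^2)" by (simp add: y_def dist_norm)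
      also have "\<dots> \<le> \<bar>(vector [0, s*e/2] :: real^2)$1\<bar> + \<bar>(vector [0, s*e/2] :: real^2)$2\<bar>"
        using norm_le_l1_cart[of "vector [0, s*e/2] :: real^2"] by (simp add: sum_2)
      also have "\<dots> = e/2" using e by (simp add: s_def)
      finally have "y \<in> ball x e" using e by simp
      then have "y \<in> Wcone" using e by auto
      moreover have "y$1 = x$1" "y$2 = x$2 + s*e/2" by (simp_all add: y_def)
      ultimately show False using eq e by (auto simp: W_iff s_def split: if_splits)
    qed
  qed
qed

lemma W_comb: "p \<in> Wcone \<Longrightarrow> q \<in> Wcone \<Longrightarrow> (a::real) \<ge> 0 \<Longrightarrow> b \<ge> 0 \<Longrightarrow> a *\<^sub>R p + b *\<^sub>R q \<in> Wcone"
proof -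
  assume p: "p \<in> Wcone" and q: "q \<in> Wcone" and a: "a \<ge> 0" and b: "b \<ge> 0"
  have "\<bar>a * p$2 + b * q$2\<bar> \<le> a * \<bar>p$2\<bar> + b * \<bar>q$2\<bar>"
    using a b by (metis abs_mult abs_of_nonneg abs_triangle_ineq)
  also have "\<dots> \<le> a * p$1 + b * q$1" using p q a b
    by (intro add_mono mult_left_mono) (auto simp: W_iff)
  finally show ?thesis using p q a b by (simp add: W_iff)
qed

definition v11 :: "real^2" where "v11 = vector [1,1]"
definition v1m :: "real^2" where "v1m = vector [1,-1]"

lemma W_decomp: "x = ((x$1+x$2)/2) *\<^sub>R v11 + ((x$1 - x$2)/2) *\<^sub>R v1m"
  by (simp add: vec2_eq v11_def v1m_def field_simps)

lemma v11W: "v11 \<in> Wcone" and v1mW: "v1m \<in> Wcone"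
  by (simp_all add: W_iff v11_def v1m_def)

lemma SW_iff: "g \<in> SW \<longleftrightarrow> det g = 1 \<and> g *v v11 \<in> Wcone \<and> g *v v1m \<in> Wcone"
proof
  assume "g \<in> SW" then show "det g = 1 \<and> g *v v11 \<in> Wcone \<and> g *v v1m \<in> Wcone"
    using v11W v1mW by (auto simp: SW_def SL2_def)
next
  assume h: "det g = 1 \<and> g *v v11 \<in> Wcone \<and> g *v v1m \<in> Wcone"
  have "g *v x \<in> Wcone" if x: "x \<in> Wcone" for x
  proof -
    have "g *v x = ((x$1+x$2)/2) *\<^sub>R (g *v v11) + ((x$1 - x$2)/2) *\<^sub>R (g *v v1m)"
      by (subst W_decomp[of x]) (simp add: matrix_vector_right_distrib matrix_vector_mult_scaleR)
    also have "\<dots> \<in> Wcone" using h x by (intro W_comb) (auto simp: W_iff)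
    finally show ?thesis .
  qed
  then show "g \<in> SW" using h by (auto simp: SW_def SL2_def)
qed

lemma SW_iff2: "(g::real^2^2) \<in> SW \<longleftrightarrow> g$1$1*g$2$2 - g$1$2*g$2$1 = 1
   \<and> \<bar>g$2$1 + g$2$2\<bar> \<le> g$1$1 + g$1$2 \<and> \<bar>g$2$1 - g$2$2\<bar> \<le> g$1$1 - g$1$2"
  unfolding SW_iff by (auto simp: W_iff mv1 mv2 v11_def v1m_def det_2)

lemma SW_mult: "g \<in> SW \<Longrightarrow> h \<in> SW \<Longrightarrow> g ** h \<in> SW"
  by (auto simp: SW_def SL2_def det_mul matrix_vector_mul_assoc[symmetric] image_subset_iff)

lemma SW_one: "mat 1 \<in> SW"
  by (auto simp: SW_def SL2_def)

lemma SL2_inj: "det (g::real^2^2) = 1 \<Longrightarrow> y \<noteq> 0 \<Longrightarrow> g *v y \<noteq> 0"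
proof
  assume d: "det g = 1" and y: "y \<noteq> 0" and g: "g *v y = 0"
  have a: "g$1$1 * y$1 + g$1$2 * y$2 = 0" "g$2$1 * y$1 + g$2$2 * y$2 = 0"
    using g by (metis mv1 mv2 zero_index)+
  have d': "g$1$1*g$2$2 - g$1$2*g$2$1 = 1" using d by (simp add: det_2)
  have c1: "y$1 = g$2$2 * (g$1$1 * y$1 + g$1$2 * y$2) - g$1$2 * (g$2$1 * y$1 + g$2$2 * y$2)"
    using d' by algebra
  have c2: "y$2 = g$1$1 * (g$2$1 * y$1 + g$2$2 * y$2) - g$2$1 * (g$1$1 * y$1 + g$1$2 * y$2)"
    using d' by algebra
  have "y$1 = 0" using c1 unfolding a by simp
  moreover have "y$2 = 0" using c2 unfolding a by simp
  ultimately have "y = 0" by (simp add: vec2_eq)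
  then show False using y by simp
qed



lemma in_proj: "x \<in> proj z \<longleftrightarrow> (\<exists>c. c \<noteq> 0 \<and> x = c *\<^sub>R z)"
  by (auto simp: proj_def)

lemma proj_self: "z \<in> proj z" unfolding in_proj by (rule exI[of _ 1]) simp

lemma zero_notin_proj: "w \<noteq> 0 \<Longrightarrow> 0 \<notin> proj w" by (auto simp: in_proj)

lemma proj_eq: "z \<noteq> 0 \<Longrightarrow> w \<noteq> 0 \<Longrightarrow> proj z = proj w \<longleftrightarrow> (\<exists>c. c \<noteq> 0 \<and> z = c *\<^sub>R w)"
proof
  assume "proj z = proj w" then show "\<exists>c. c \<noteq> 0 \<and> z = c *\<^sub>R w"
    using proj_self[of z] by (simp add: in_proj)
next
  assume "\<exists>c. c \<noteq> 0 \<and> z = c *\<^sub>R w"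
  then obtain c where c: "c \<noteq> 0" "z = c *\<^sub>R w" by blast
  show "proj z = proj w"
  proof (rule set_eqI, rule iffI)
    fix x assume "x \<in> proj z" then obtain d where "d \<noteq> 0" "x = d *\<^sub>R z" by (auto simp: in_proj)
    then show "x \<in> proj w" using c by (auto simp: in_proj intro!: exI[of _ "d*c"])
  next
    fix x assume "x \<in> proj w" then obtain d where "d \<noteq> 0" "x = d *\<^sub>R w" by (auto simp: in_proj)
    then show "x \<in> proj z" using c by (auto simp: in_proj intro!: exI[of _ "d/c"])
  qed
qed

lemma proj_scale: "w \<noteq> 0 \<Longrightarrow> c \<noteq> 0 \<Longrightarrow> proj (c *\<^sub>R w) = proj w"
  by (subst proj_eq) auto

lemma act_proj: "act g (proj y) = proj (g *v y)"
proof -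
  have pe: "proj x = (\<lambda>c. c *\<^sub>R x) ` {c. c \<noteq> 0}" for x unfolding proj_def by auto
  have "act g (proj y) = (\<lambda>c. c *\<^sub>R (g *v y)) ` {c. c \<noteq> 0}"
    unfolding act_def pe image_image by (simp add: matrix_vector_mult_scaleR)
  also have "\<dots> = proj (g *v y)" unfolding pe ..
  finally show ?thesis .
qed

lemma P1_mem: "p \<in> P1 \<longleftrightarrow> (\<exists>z. z \<noteq> 0 \<and> p = proj z)"
  by (auto simp: P1_def)

definition D0 :: "(real^2) set set" where "D0 = proj ` (Wcone - {0})"

lemma W_scale: "z \<in> Wcone \<Longrightarrow> (c::real) \<ge> 0 \<Longrightarrow> c *\<^sub>R z \<in> Wcone"
  using W_comb[of z z c 0] by simp

lemma I_scale: "z \<in> Iset \<Longrightarrow> (c::real) > 0 \<Longrightarrow> c *\<^sub>R z \<in> Iset"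
  by (auto simp: Iset_def abs_mult)

lemma W_neg_zero: "z \<in> Wcone \<Longrightarrow> -z \<in> Wcone \<Longrightarrow> z = 0"
  by (auto simp: W_iff vec2_eq)

lemma I_nz: "z \<in> Iset \<Longrightarrow> z \<noteq> 0" by (auto simp: Iset_def)

lemma pre_D0: "z \<noteq> 0 \<Longrightarrow> proj z \<in> D0 \<longleftrightarrow> z \<in> Wcone \<or> -z \<in> Wcone"
proof
  assume z: "z \<noteq> 0" and "proj z \<in> D0"
  then obtain w where w: "w \<in> Wcone" "w \<noteq> 0" "proj z = proj w" by (auto simp: D0_def)
  then obtain c where c: "c \<noteq> 0" "z = c *\<^sub>R w" using proj_eq z by blast
  show "z \<in> Wcone \<or> -z \<in> Wcone"
  proof (cases "c > 0")
    case True then show ?thesis using W_scale[of w c] c w by auto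
  next
    case False then have "-z = (-c) *\<^sub>R w" "-c \<ge> 0" using c by auto
    then show ?thesis using W_scale[of w "-c"] w by auto
  qed
next
  assume z: "z \<noteq> 0" and zz: "z \<in> Wcone \<or> -z \<in> Wcone"
  from zz show "proj z \<in> D0"
  proof
    assume "z \<in> Wcone" then show ?thesis using z by (auto simp: D0_def)
  next
    assume "-z \<in> Wcone"
    moreover have "proj z = proj (-z)" using z by (subst proj_eq) (auto intro!: exI[of _ "-1"])
    ultimately show ?thesis using z by (auto simp: D0_def)
  qed
qed

lemma pre_C0: "z \<noteq> 0 \<Longrightarrow> proj z \<in> C0 \<longleftrightarrow> z \<in> Iset \<or> -z \<in> Iset"
proof
  assume z: "z \<noteq> 0" and "proj z \<in> C0"
  then obtain w where w: "w \<in> Iset" "proj z = proj w" by (auto simp: C0_def interior_W)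
  then have wn: "w \<noteq> 0" using I_nz by auto
  then obtain c where c: "c \<noteq> 0" "z = c *\<^sub>R w" using proj_eq z w by blast
  show "z \<in> Iset \<or> -z \<in> Iset"
  proof (cases "c > 0")
    case True then show ?thesis using I_scale[of w c] c w by auto
  next
    case False then have "-z = (-c) *\<^sub>R w" "-c > 0" using c by auto
    then show ?thesis using I_scale[of w "-c"] w by auto
  qed
next
  assume z: "z \<noteq> 0" and zz: "z \<in> Iset \<or> -z \<in> Iset"
  from zz show "proj z \<in> C0"
  proof
    assume "z \<in> Iset" then show ?thesis by (auto simp: C0_def interior_W)
  next
    assume "-z \<in> Iset"
    moreover have "proj z = proj (-z)" using z by (subst proj_eq) (auto intro!: exI[of _ "-1"])
    ultimately show ?thesis by (auto simp: C0_def interior_W)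
  qed
qed

lemma istop: "istopology (\<lambda>U. U \<subseteq> P1 \<and> open {z. z \<noteq> 0 \<and> proj z \<in> U})"
  unfolding istopology_def
proof (rule conjI; intro allI impI)
  fix S T :: "(real^2) set set"
  assume "S \<subseteq> P1 \<and> open {z. z \<noteq> 0 \<and> proj z \<in> S}" "T \<subseteq> P1 \<and> open {z. z \<noteq> 0 \<and> proj z \<in> T}"
  moreover have "{z. z \<noteq> 0 \<and> proj z \<in> S \<inter> T} = {z. z \<noteq> 0 \<and> proj z \<in> S} \<inter> {z. z \<noteq> 0 \<and> proj z \<in> T}" by auto
  ultimately show "S \<inter> T \<subseteq> P1 \<and> open {z. z \<noteq> 0 \<and> proj z \<in> S \<inter> T}" by auto
next
  fix K :: "(real^2) set set set"
  assume h: "\<forall>K\<in>K. K \<subseteq> P1 \<and> open {z. z \<noteq> 0 \<and> proj z \<in> K}"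
  have "{z. z \<noteq> 0 \<and> proj z \<in> \<Union>K} = (\<Union>k\<in>K. {z. z \<noteq> 0 \<and> proj z \<in> k})" by auto
  then show "\<Union>K \<subseteq> P1 \<and> open {z. z \<noteq> 0 \<and> proj z \<in> \<Union>K}" using h by auto
qed

lemma openin_P1: "openin P1_top U \<longleftrightarrow> U \<subseteq> P1 \<and> open {z. z \<noteq> 0 \<and> proj z \<in> U}"
  unfolding P1_top_def topology_inverse'[OF istop] ..

lemma topspace_P1: "topspace P1_top = P1"
proof -
  have "{z. z \<noteq> 0 \<and> proj z \<in> P1} = - {0}" by (auto simp: P1_def)
  then have "openin P1_top P1" by (simp add: openin_P1 open_Compl)
  then show ?thesis using openin_subset[of P1_top] by (auto simp: openin_P1 topspace_def)
qed

lemma D0_P1: "D0 \<subseteq> P1" by (auto simp: D0_def P1_def)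

lemma closed_D0: "closedin P1_top D0"
proof -
  have "{z. z \<noteq> 0 \<and> proj z \<in> P1 - D0} = - (Wcone \<union> uminus ` Wcone)"
  proof (rule set_eqI)
    fix z :: "real^2"
    have u: "z \<in> uminus ` Wcone \<longleftrightarrow> -z \<in> Wcone" by (metis image_iff minus_minus)
    show "z \<in> {z. z \<noteq> 0 \<and> proj z \<in> P1 - D0} \<longleftrightarrow> z \<in> - (Wcone \<union> uminus ` Wcone)"
    proof (cases "z = 0")
      case True then show ?thesis by (simp add: W_iff)
    next
      case False then show ?thesis using pre_D0[OF False] u by (auto simp: P1_mem)
    qed
  qed
  moreover have "closed (uminus ` Wcone)" using closed_W closed_negations by blast
  ultimately have "open {z. z \<noteq> 0 \<and> proj z \<in> P1 - D0}" using closed_W by auto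
  then show ?thesis by (simp add: closedin_def topspace_P1 openin_P1 D0_P1)
qed

lemma C0_D0: "C0 \<subseteq> D0" using Iset_sub I_nz by (auto simp: C0_def D0_def interior_W)

lemma open_C0: "openin P1_top C0"
proof -
  have "{z. z \<noteq> 0 \<and> proj z \<in> C0} = Iset \<union> uminus ` Iset"
  proof (rule set_eqI)
    fix z :: "real^2"
    have u: "z \<in> uminus ` Iset \<longleftrightarrow> -z \<in> Iset" by (metis image_iff minus_minus)
    show "z \<in> {z. z \<noteq> 0 \<and> proj z \<in> C0} \<longleftrightarrow> z \<in> Iset \<union> uminus ` Iset"
    proof (cases "z = 0")
      case True then show ?thesis using I_nz u by auto
    next
      case False then show ?thesis using pre_C0[OF False] u by auto
    qed
  qed
  moreover have "open (uminus ` Iset)" using open_Iset open_negations by blast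
  ultimately show ?thesis using open_Iset C0_D0 D0_P1 by (simp add: openin_P1 open_Un)
qed



lemma mat2_mv: "mat2 a b c d *v x = vector [a * x$1 + b * x$2, c * x$1 + d * x$2]"
  by (simp add: vec2_eq mv1 mv2)

lemma e1_comp[simp]: "e1$1 = 1" "e1$2 = 0" by (simp_all add: e1_def)
lemma e1_nz: "e1 \<noteq> 0" by (simp add: vec2_eq)

lemma mat2_SW: "mat2 a b c d \<in> SW \<longleftrightarrow> a*d - b*c = 1 \<and> \<bar>c + d\<bar> \<le> a + b \<and> \<bar>c - d\<bar> \<le> a - b"
  by (simp add: SW_iff2)

lemma W_pos: "y \<in> Wcone \<Longrightarrow> y \<noteq> 0 \<Longrightarrow> y$1 > 0"
  by (auto simp: W_iff vec2_eq)

lemma kmat0: "\<bar>r\<bar> \<le> 1/2 \<Longrightarrow> mat2 2 0 (-r) (1/2) \<in> SW"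
  unfolding mat2_SW by (auto simp: abs_le_iff)

lemma kmat: assumes y: "y \<in> Wcone" "y \<noteq> 0"
  shows "mat2 2 0 (-(y$2)/(2*y$1)) (1/2) \<in> SW" "mat2 2 0 (-(y$2)/(2*y$1)) (1/2) *v y = (2*y$1) *\<^sub>R e1"
proof -
  have p: "y$1 > 0" using W_pos y by auto
  have "\<bar>y$2\<bar> \<le> y$1" using y by (simp add: W_iff)
  then have q: "\<bar>y$2/(2*y$1)\<bar> \<le> 1/2" using p by (simp add: abs_div divide_le_eq)
  show "mat2 2 0 (-(y$2)/(2*y$1)) (1/2) \<in> SW" using kmat0[OF q] by simp
  show "mat2 2 0 (-(y$2)/(2*y$1)) (1/2) *v y = (2*y$1) *\<^sub>R e1" using p
    by (simp add: mat2_mv vec2_eq field_simps)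
qed

lemma hmat0: assumes "A > 0" "1/A \<le> A - \<bar>B\<bar>" shows "mat2 A 0 B (1/A) \<in> SW"
proof -
  define X where "X = 1/A"
  have "X > 0" "X \<le> A - \<bar>B\<bar>" "A * X = 1" using assms by (auto simp: X_def)
  then have "A * X - 0 * B = 1 \<and> \<bar>B + X\<bar> \<le> A + 0 \<and> \<bar>B - X\<bar> \<le> A - 0" by (auto simp: abs_le_iff)
  then show ?thesis unfolding mat2_SW X_def .
qed

lemma hmat: assumes w: "w \<in> Iset"
  obtains h t where "h \<in> SW" "t > 0" "h *v e1 = t *\<^sub>R w"
proof -
  have w1: "w$1 > 0" and w2: "\<bar>w$2\<bar> < w$1" using w by (auto simp: Iset_def)
  define a where "a = w$1 * (w$1 - \<bar>w$2\<bar>)"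
  have a: "a > 0" using w1 w2 by (simp add: a_def)
  define t where "t = max 1 (1/a)"
  have t1: "t \<ge> 1" and ta: "t \<ge> 1/a" by (auto simp: t_def)
  have "t * t * a \<ge> t * a" using t1 a by (simp add: mult_right_mono)
  moreover have "t * a \<ge> 1" using ta a by (simp add: divide_le_eq mult.commute)
  ultimately have tta: "t * t * a \<ge> 1" by linarith
  have tw: "t * w$1 > 0" using t1 w1 by simp
  have "1 \<le> (t*w$1 - t*\<bar>w$2\<bar>) * (t*w$1)" using tta by (simp add: a_def algebra_simps)
  then have key: "1/(t*w$1) \<le> t*w$1 - t*\<bar>w$2\<bar>"
    using tw by (simp add: divide_le_eq)
  have abs_tw2: "\<bar>t * w$2\<bar> = t * \<bar>w$2\<bar>" using t1 by (simp add: abs_mult)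
  have "mat2 (t*w$1) 0 (t*w$2) (1/(t*w$1)) \<in> SW"
    using hmat0[OF tw] key abs_tw2 by simp
  moreover have "mat2 (t*w$1) 0 (t*w$2) (1/(t*w$1)) *v e1 = t *\<^sub>R w"
    by (simp add: mat2_mv vec2_eq)
  moreover have "t > 0" using t1 by simp
  ultimately show ?thesis using that by blast
qed

lemma to_D0: assumes y: "y \<noteq> 0" shows "\<exists>g\<in>SW. g *v y \<in> Wcone \<or> -(g *v y) \<in> Wcone"
proof (cases "y \<in> Wcone \<or> -y \<in> Wcone")
  case True then show ?thesis using SW_one by (intro bexI[of _ "mat 1"]) auto
next
  case False
  define u where "u = y$1 + y$2"
  define v where "v = y$1 - y$2"
  have uv: "u > 0 \<and> v < 0 \<or> u < 0 \<and> v > 0" using False by (auto simp: W_iff u_def v_def)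
  then have un: "u \<noteq> 0" by auto
  define t where "t = 1 + \<bar>v\<bar>/\<bar>u\<bar>"
  have t: "t \<ge> 0" by (simp add: t_def)
  have "mat2 (1+t/2) (t/2) (-t/2) (1-t/2) \<in> SW" unfolding mat2_SW using t by (auto simp: field_simps)
  moreover have tu: "(t/2)*u = y$2"
    using uv un by (auto simp: t_def u_def v_def field_simps)
  have "mat2 (1+t/2) (t/2) (-t/2) (1-t/2) *v y = vector [y$1 + (t/2)*u, y$2 - (t/2)*u]"
    by (simp add: mat2_mv u_def algebra_simps)
  then have "mat2 (1+t/2) (t/2) (-t/2) (1-t/2) *v y = vector [u, 0]"
    unfolding tu by (simp add: u_def)
  moreover have "vector [u, 0] \<in> Wcone \<or> - vector [u, 0] \<in> Wcone" by (auto simp: W_iff)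
  ultimately show ?thesis by metis
qed

lemma trans_SW: assumes y: "y \<in> Wcone" "y \<noteq> 0" and w: "w \<in> Iset"
  shows "\<exists>g\<in>SW. \<exists>c. c \<noteq> 0 \<and> g *v y = c *\<^sub>R w"
proof -
  obtain h t where h: "h \<in> SW" "t > 0" "h *v e1 = t *\<^sub>R w" using hmat[OF w] by blast
  let ?k = "mat2 2 0 (-(y$2)/(2*y$1)) (1/2)"
  have "(h ** ?k) *v y = h *v ((2*y$1) *\<^sub>R e1)" using kmat[OF y] by (simp add: matrix_vector_mul_assoc[symmetric])
  also have "\<dots> = (2*y$1*t) *\<^sub>R w" using h by (simp add: matrix_vector_mult_scaleR)
  finally show ?thesis using SW_mult[OF h(1) kmat(1)[OF y]] W_pos[OF y] h(2) by (intro bexI[of _ "h ** ?k"] exI[of _ "2*y$1*t"]) auto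
qed



lemma D0_inv: "g \<in> SW \<Longrightarrow> x \<in> D0 \<Longrightarrow> act g x \<in> D0"
proof -
  assume g: "g \<in> SW" and "x \<in> D0"
  then obtain y where y: "y \<in> Wcone" "y \<noteq> 0" "x = proj y" by (auto simp: D0_def)
  have "g *v y \<in> Wcone" using g y by (auto simp: SW_def)
  moreover have "g *v y \<noteq> 0" using g y SL2_inj by (auto simp: SW_def SL2_def)
  ultimately show ?thesis using y by (auto simp: act_proj D0_def)
qed

lemma e1_I: "e1 \<in> Iset" by (simp add: Iset_def)

lemma D0_cand: "ics_candidate SW D0"
  unfolding ics_candidate_def
proof (intro conjI ballI)
  show "D0 \<subseteq> P1" by (rule D0_P1)
  have "C0 \<subseteq> P1_top interior_of D0" by (rule interior_of_maximal[OF C0_D0 open_C0])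
  moreover have "proj e1 \<in> C0" using e1_I by (auto simp: C0_def interior_W)
  ultimately show "P1_top interior_of D0 \<noteq> {}" by auto
next
  fix g x assume "g \<in> SW" "x \<in> D0" then show "act g x \<in> D0" by (rule D0_inv)
next
  fix x assume "x \<in> D0"
  then obtain y where y: "y \<in> Wcone" "y \<noteq> 0" "x = proj y" by (auto simp: D0_def)
  show "D0 \<subseteq> P1_top closure_of orbit SW x"
  proof
    fix p assume "p \<in> D0"
    then obtain w where w: "w \<in> Wcone" "w \<noteq> 0" "p = proj w" by (auto simp: D0_def)
    show "p \<in> P1_top closure_of orbit SW x"
      unfolding in_closure_of
    proof (intro conjI allI impI)
      show "p \<in> topspace P1_top" using \<open>p \<in> D0\<close> D0_P1 topspace_P1 by auto
      fix T assume T: "p \<in> T \<and> openin P1_top T"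
      then have "open {z. z \<noteq> 0 \<and> proj z \<in> T}" by (simp add: openin_P1)
      moreover have "w \<in> {z. z \<noteq> 0 \<and> proj z \<in> T}" using w T by auto
      ultimately obtain e where e: "e > 0" "ball w e \<subseteq> {z. z \<noteq> 0 \<and> proj z \<in> T}"
        using open_contains_ball by blast
      define w' where "w' = w + (e/2) *\<^sub>R e1"
      have "dist w w' = e/2" using e by (simp add: w'_def dist_norm norm_vec_def L2_set_def sum_2)
      then have "w' \<in> ball w e" using e by simp
      then have pw': "proj w' \<in> T" using e by auto
      have "w' \<in> Iset" using w e by (auto simp: w'_def Iset_def W_iff)
      then obtain g c where g: "g \<in> SW" "c \<noteq> 0" "g *v y = c *\<^sub>R w'" using trans_SW[OF y(1,2)] by blast
      have "act g x = proj w'" using g y \<open>w' \<in> Iset\<close> I_nz by (simp add: act_proj proj_scale)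
      then show "\<exists>q. q \<in> orbit SW x \<and> q \<in> T" using g pw' by (auto simp: orbit_def)
    qed
  qed
qed

lemma cand_sub: assumes "ics_candidate SW D" shows "D \<subseteq> D0"
proof -
  have DP: "D \<subseteq> P1" and ne: "P1_top interior_of D \<noteq> {}"
    and cl: "\<forall>x\<in>D. D \<subseteq> P1_top closure_of (orbit SW x)"
    and inv: "\<forall>g\<in>SW. \<forall>x\<in>D. act g x \<in> D" using assms by (auto simp: ics_candidate_def)
  obtain x where x: "x \<in> D" using ne interior_of_subset[of P1_top D] by blast
  have "x \<in> P1" using DP x by auto
  then obtain y where y: "y \<noteq> 0" "x = proj y" unfolding P1_mem by blast
  obtain g where g: "g \<in> SW" "g *v y \<in> Wcone \<or> -(g *v y) \<in> Wcone" using to_D0[OF y(1)] by blast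
  have gy: "g *v y \<noteq> 0" using g y SL2_inj by (auto simp: SW_def SL2_def)
  define x0 where "x0 = act g x"
  have x0D: "x0 \<in> D" using inv g x by (auto simp: x0_def)
  have x0D0: "x0 \<in> D0" using pre_D0[OF gy] g y by (simp add: x0_def act_proj)
  have "orbit SW x0 \<subseteq> D0" using D0_inv x0D0 by (auto simp: orbit_def)
  then have "P1_top closure_of orbit SW x0 \<subseteq> D0" by (rule closure_of_minimal[OF _ closed_D0])
  then show ?thesis using cl x0D by blast
qed

lemma ics_iff: "invariant_control_set SW D \<longleftrightarrow> D = D0"
proof
  assume h: "invariant_control_set SW D"
  then have "D \<subseteq> D0" using cand_sub by (auto simp: invariant_control_set_def)
  then show "D = D0" using h D0_cand by (auto simp: invariant_control_set_def)
next
  assume "D = D0"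
  then show "invariant_control_set SW D" using D0_cand cand_sub
    by (auto simp: invariant_control_set_def)
qed

lemma ex1_ics: "\<exists>!D. invariant_control_set SW D"
  using ics_iff by auto



lemma open_O: "open {g::real^2^2. g *v v11 \<in> Iset \<and> g *v v1m \<in> Iset}"
proof -
  have "{g::real^2^2. g *v v11 \<in> Iset \<and> g *v v1m \<in> Iset} =
    {g. \<bar>g$2$1 + g$2$2\<bar> < g$1$1 + g$1$2} \<inter> {g. \<bar>g$2$1 - g$2$2\<bar> < g$1$1 - g$1$2}"
    by (auto simp: Iset_def mv1 mv2 v11_def v1m_def)
  moreover have "open {g::real^2^2. \<bar>g$2$1 + g$2$2\<bar> < g$1$1 + g$1$2}"
    by (intro open_Collect_less continuous_intros)
  moreover have "open {g::real^2^2. \<bar>g$2$1 - g$2$2\<bar> < g$1$1 - g$1$2}"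
    by (intro open_Collect_less continuous_intros)
  ultimately show ?thesis by auto
qed

lemma O_interior: assumes "det g = 1" "g *v v11 \<in> Iset" "g *v v1m \<in> Iset"
  shows "g \<in> (top_of_set SL2) interior_of SW"
proof -
  let ?O = "{g::real^2^2. g *v v11 \<in> Iset \<and> g *v v1m \<in> Iset}"
  have "openin (top_of_set SL2) (SL2 \<inter> ?O)" using open_O by (auto simp: openin_open)
  moreover have "SL2 \<inter> ?O \<subseteq> SW" using Iset_sub by (auto simp: SW_iff SL2_def)
  ultimately have "SL2 \<inter> ?O \<subseteq> (top_of_set SL2) interior_of SW" by (rule interior_of_maximal[rotated])
  then show ?thesis using assms by (auto simp: SL2_def)
qed

lemma core_sup: assumes w: "w \<in> Iset" shows "proj w \<in> core SW D0"
proof -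
  have w1: "w$1 > 0" and w2: "\<bar>w$2\<bar> < w$1" using w by (auto simp: Iset_def)
  define c where "c = 1 / sqrt (w$1 + 1)"
  have c: "c > 0" using w1 by (simp add: c_def)
  have cc: "c * c * (w$1 + 1) = 1" using w1 by (simp add: c_def)
  define g where "g = mat2 (c*(w$1+1)) 0 (c*w$2) c"
  have Ivec: "vector [c*a, c*b] \<in> Iset" if "\<bar>b\<bar> < a" for a b
  proof -
    have "\<bar>c*b\<bar> = c * \<bar>b\<bar>" using c by (simp add: abs_mult)
    also have "\<dots> < c * a" using c that by (rule mult_strict_left_mono[rotated])
    finally show ?thesis by (simp add: Iset_def)
  qed
  have "g *v v11 = vector [c*(w$1+1), c*(w$2+1)]" by (simp add: g_def mat2_mv v11_def algebra_simps)
  moreover have "\<bar>w$2+1\<bar> < w$1+1" using w2 by linarith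
  ultimately have "g *v v11 \<in> Iset" using Ivec by simp
  moreover have "g *v v1m = vector [c*(w$1+1), c*(w$2-1)]" by (simp add: g_def mat2_mv v1m_def algebra_simps)
  moreover have "\<bar>w$2-1\<bar> < w$1+1" using w2 by linarith
  ultimately have "g *v v11 \<in> Iset" "g *v v1m \<in> Iset" using Ivec by simp_all
  moreover have "det g = 1" using cc by (simp add: g_def algebra_simps)
  ultimately have gi: "g \<in> (top_of_set SL2) interior_of SW" using O_interior by blast
  have "g *v w = (c*(w$1+1)) *\<^sub>R w" by (simp add: g_def mat2_mv vec2_eq algebra_simps)
  then have "act g (proj w) = proj w" using c w1 I_nz[OF w] by (simp add: act_proj proj_scale)
  moreover have "proj w \<in> D0" using w Iset_sub I_nz by (auto simp: D0_def)
  ultimately show ?thesis using gi by (auto simp: core_def)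
qed



lemma core_sub: assumes x: "x \<in> core SW D0" shows "x \<in> C0"
proof -
  obtain g where xD: "x \<in> D0" and gi: "g \<in> (top_of_set SL2) interior_of SW" and fx: "act g x = x"
    using x by (auto simp: core_def)
  obtain y where y: "y \<in> Wcone" "y \<noteq> 0" "x = proj y" using xD by (auto simp: D0_def)
  show ?thesis
  proof (cases "y \<in> Iset")
    case True then show ?thesis using y by (auto simp: C0_def interior_W)
  next
    case False
    have y1: "y$1 > 0" using W_pos y by auto
    have ey: "\<bar>y$2\<bar> = y$1" using False y by (auto simp: Iset_def W_iff)
    define s where "s = (if y$2 \<ge> 0 then 1 else -1::real)"
    have ys: "y$2 = s * y$1" using ey by (auto simp: s_def)
    have s2: "s * s = 1" by (simp add: s_def)
    obtain T where T: "openin (top_of_set SL2) T" "g \<in> T" "T \<subseteq> SW"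
      using gi by (auto simp: interior_of_def)
    obtain U where U: "open U" "T = SL2 \<inter> U" using T(1) by (auto simp: openin_open)
    have gS: "g \<in> SL2" "g \<in> U" using T U by auto
    obtain e where e: "e > 0" "ball g e \<subseteq> U" using U(1) gS(2) open_contains_ball by blast
    have gyn: "g *v y \<noteq> 0" using gS SL2_inj y by (auto simp: SL2_def)
    have "proj (g *v y) = proj y" using fx y by (simp add: act_proj)
    then obtain l where l: "l \<noteq> 0" "g *v y = l *\<^sub>R y" using proj_eq gyn y by blast
    define N where "N = mat2 0 0 (s * g$1$1) (s * g$1$2)"
    define t where "t = e / (2 * (norm N + 1))"
    have t: "t > 0" unfolding t_def using e by (intro divide_pos_pos) (auto intro: add_nonneg_pos)
    have "t * norm N < e"
    proof -
      have "t * norm N \<le> t * (norm N + 1)" using t by simp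
      also have "\<dots> = e/2" unfolding t_def
      proof -
        have "norm N + 1 > 0" using norm_ge_zero[of N] by linarith
        then show "e / (2 * (norm N + 1)) * (norm N + 1) = e / 2" by (simp add: field_simps)
      qed
      finally show ?thesis using e by simp
    qed
    define h where "h = g + t *\<^sub>R N"
    have "dist h g = t * norm N" using t by (simp add: h_def dist_norm)
    then have "h \<in> U" using e \<open>t * norm N < e\<close> by (auto simp: dist_commute)
    have hc: "h$1$1 = g$1$1" "h$1$2 = g$1$2" "h$2$1 = g$2$1 + t * (s * g$1$1)" "h$2$2 = g$2$2 + t * (s * g$1$2)"
      by (simp_all add: h_def N_def)
    have "det h = g$1$1 * (g$2$2 + t * (s * g$1$2)) - g$1$2 * (g$2$1 + t * (s * g$1$1))"
      by (simp add: det_2 hc)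
    also have "\<dots> = g$1$1 * g$2$2 - g$1$2 * g$2$1" by (simp add: algebra_simps)
    also have "\<dots> = 1" using gS(1) by (simp add: SL2_def det_2)
    finally have "det h = 1" .
    moreover note \<open>h \<in> U\<close>
    ultimately have "h \<in> SW" using T U by (auto simp: SL2_def)
    then have hy: "h *v y \<in> Wcone" using y by (auto simp: SW_def)
    have g1: "g$1$1 * y$1 + g$1$2 * y$2 = l * y$1" using arg_cong[OF l(2), of "\<lambda>v. v$1"] by (simp add: mv1)
    have g2: "g$2$1 * y$1 + g$2$2 * y$2 = l * y$2" using arg_cong[OF l(2), of "\<lambda>v. v$2"] by (simp add: mv2)
    have h1: "(h *v y)$1 = l * y$1" using g1 by (simp add: mv1 hc)
    have "(h *v y)$2 = (g$2$1 + t * (s * g$1$1)) * y$1 + (g$2$2 + t * (s * g$1$2)) * y$2"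
      by (simp add: mv2 hc)
    also have "\<dots> = (g$2$1 * y$1 + g$2$2 * y$2) + t * s * (g$1$1 * y$1 + g$1$2 * y$2)"
      by (simp add: algebra_simps)
    also have "\<dots> = l * y$2 + t * s * (l * y$1)" unfolding g1 g2 ..
    also have "\<dots> = s * (l * y$1) * (1 + t)" using ys s2
      by (simp add: algebra_simps)
    finally have h2: "(h *v y)$2 = s * (l * y$1) * (1 + t)" .
    have abss: "\<bar>s\<bar> = 1" by (simp add: s_def)
    have "\<bar>(h *v y)$2\<bar> = \<bar>l * y$1\<bar> * (1 + t)" using t unfolding h2
      by (simp add: abs_mult abss)
    moreover have ne: "l * y$1 \<noteq> 0" using l y1 by simp
    moreover have "0 \<le> l * y$1" "\<bar>(h *v y)$2\<bar> \<le> l * y$1" using hy h1 by (auto simp: W_iff)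
    ultimately have "l * y$1 * (1 + t) \<le> l * y$1" by simp
    then have "l * y$1 * t \<le> 0" by (simp add: algebra_simps)
    moreover have "l * y$1 > 0" using ne \<open>0 \<le> l * y$1\<close> by linarith
    then have "l * y$1 * t > 0" using t by simp
    ultimately show ?thesis by simp
  qed
qed



lemma SW_e1: assumes g: "g \<in> SW" shows "norm (g *v e1) \<ge> 1/2"
proof -
  define p1 where "p1 = g$1$1 + g$1$2"
  define q1 where "q1 = g$1$1 - g$1$2"
  define p2 where "p2 = g$2$1 + g$2$2"
  define q2 where "q2 = g$2$1 - g$2$2"
  have d: "g$1$1*g$2$2 - g$1$2*g$2$1 = 1" and pp: "\<bar>p2\<bar> \<le> p1" and qq: "\<bar>q2\<bar> \<le> q1"
    using g unfolding SW_iff2 p1_def q1_def p2_def q2_def by auto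
  have "p2 * q1 - p1 * q2 = 2" using d unfolding p1_def q1_def p2_def q2_def by algebra
  moreover have "p2 * q1 \<le> p1 * q1" using pp qq by (intro mult_right_mono) auto
  moreover have "- (p1 * q2) \<le> p1 * q1" using pp qq
    by (metis abs_ge_minus_self abs_ge_zero dual_order.trans minus_mult_right mult_left_mono)
  ultimately have pq: "p1 * q1 \<ge> 1" by linarith
  have "p1 + q1 \<ge> 1"
  proof (rule ccontr)
    assume "\<not> ?thesis"
    then have "q1 \<le> 1" "p1 \<ge> 0" "q1 \<ge> 0" "p1 < 1" using pp qq by auto
    then have "p1 * q1 \<le> p1 * 1" by (intro mult_left_mono)
    then show False using pq \<open>p1 < 1\<close> by linarith
  qed
  then have "g$1$1 \<ge> 1/2" by (simp add: p1_def q1_def)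
  moreover have "\<bar>(g *v e1)$1\<bar> \<le> norm (g *v e1)" by (rule component_le_norm_cart)
  ultimately show ?thesis by (simp add: mv1)
qed

lemma norm_e1: "norm e1 = 1" by (simp add: e1_def norm_vec_def L2_set_def sum_2)

lemma part2: assumes z: "z \<noteq> 0" "proj z \<in> C0"
  shows "(\<exists>h\<in>SW. proj z = act h (proj e1) \<and>
              (\<forall>g\<in>SW. rho g z \<ge> 1 / (2 * onorm (\<lambda>x. h *v x))))
         \<and> (INF g\<in>SW. rho g z) > 0"
proof -
  obtain w where w: "w \<in> Iset" "proj z = proj w"
  proof (cases "z \<in> Iset")
    case True then show ?thesis using that by blast
  next
    case False then have "-z \<in> Iset" using pre_C0 z by auto
    moreover have "proj z = proj (-z)" using z by (subst proj_eq) (auto intro!: exI[of _ "-1"])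
    ultimately show ?thesis using that by blast
  qed
  obtain h t where h: "h \<in> SW" "t > 0" "h *v e1 = t *\<^sub>R w" using hmat[OF w(1)] by blast
  have wn: "w \<noteq> 0" using I_nz w by auto
  have he: "h *v e1 \<noteq> 0" using h wn by simp
  have pz: "proj z = act h (proj e1)" using w h wn by (simp add: act_proj proj_scale)
  then have "proj z = proj (h *v e1)" by (simp add: act_proj)
  then obtain c where c: "c \<noteq> 0" "z = c *\<^sub>R (h *v e1)" using proj_eq z he by blast
  have on: "norm (h *v e1) \<le> onorm (\<lambda>x. h *v x)"
    using onorm[OF matrix_vector_mul_bounded_linear[of h], of e1]
    by (simp add: norm_e1)
  have nhe: "norm (h *v e1) > 0" using he by simp
  have opos: "onorm (\<lambda>x. h *v x) > 0" using on nhe by linarith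
  have bound: "rho g z \<ge> 1 / (2 * onorm (\<lambda>x. h *v x))" if g: "g \<in> SW" for g
  proof -
    have "rho g z = norm ((g ** h) *v e1) / norm (h *v e1)"
      using c by (simp add: rho_def matrix_vector_mult_scaleR matrix_vector_mul_assoc)
    moreover have "norm ((g ** h) *v e1) \<ge> 1/2" using SW_e1 SW_mult[OF g h(1)] by blast
    ultimately have "rho g z \<ge> (1/2) / norm (h *v e1)" using nhe divide_right_mono[of "1/2" "norm ((g ** h) *v e1)" "norm (h *v e1)"] by simp
    moreover have "(1/2) / norm (h *v e1) \<ge> (1/2) / onorm (\<lambda>x. h *v x)"
      using on nhe opos by (intro divide_left_mono) auto
    ultimately show ?thesis by simp
  qed
  have "(INF g\<in>SW. rho g z) \<ge> 1 / (2 * onorm (\<lambda>x. h *v x))"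
    using SW_one bound by (intro cINF_greatest) auto
  moreover have "1 / (2 * onorm (\<lambda>x. h *v x)) > 0" using opos by simp
  ultimately have "(INF g\<in>SW. rho g z) > 0" by linarith
  then show ?thesis using h(1) pz bound by auto
qed

lemma part3: "(INF p\<in>SW \<times> {z. z \<noteq> 0 \<and> proj z \<in> C0}. rho (fst p) (snd p)) = 0"
proof -
  let ?A = "SW \<times> {z. z \<noteq> 0 \<and> proj z \<in> C0}"
  let ?f = "\<lambda>p. rho (fst p) (snd p)"
  have nn: "?f p \<ge> 0" for p by (simp add: rho_def)
  have small: "\<exists>p\<in>?A. ?f p < ep" if eps: "ep > 0" for ep
  proof -
    define s where "s = max 1 (3/ep)"
    have s1: "s \<ge> 1" and s3: "s \<ge> 3/ep" by (auto simp: s_def)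
    have sp: "s > 0" using s1 by simp
    define g where "g = mat2 ((s+1/s)/2) ((s-1/s)/2) ((s-1/s)/2) ((s+1/s)/2)"
    define r0 where "r0 = 1 / (s * s)"
    define z :: "real^2" where "z = vector [1+r0, r0-1]"
    have "1 \<le> s * s" using s1 mult_mono[of 1 s 1 s] by auto
    then have tt: "r0 > 0" "r0 \<le> 1" by (auto simp: r0_def)
    have gSW: "g \<in> SW" unfolding g_def mat2_SW using sp s1
      by (auto simp: field_simps power2_eq_square abs_le_iff)
    have zI: "z \<in> Iset" using tt by (auto simp: z_def Iset_def)
    then have zn: "z \<noteq> 0" using I_nz by auto
    have zC: "proj z \<in> C0" using pre_C0[OF zn] zI by auto
    have gz: "g *v z = vector [2/s, 0]" using sp
      by (simp add: g_def z_def r0_def mat2_mv vec2_eq field_simps)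
    have a1: "norm (g *v z) \<le> 2/s"
      using norm_le_l1_cart[of "g *v z"] sp unfolding gz by (simp add: sum_2)
    have a2: "norm z \<ge> 1" using component_le_norm_cart[of z 1] tt by (simp add: z_def)
    have "norm (g *v z) / norm z \<le> norm (g *v z) / 1"
      using a2 by (intro divide_left_mono) auto
    then have "rho g z \<le> 2/s" using a1 by (simp add: rho_def)
    also have "2/s < ep"
    proof -
      have "3/ep * ep = 3" using eps by simp
      then have "s * ep \<ge> 3" using s3 eps by (metis mult_right_mono less_imp_le)
      then show ?thesis using sp eps by (simp add: divide_less_eq mult.commute)
    qed
    finally show ?thesis using gSW zn zC by (intro bexI[of _ "(g, z)"]) auto
  qed
  have ne: "?A \<noteq> {}" using small[of 1] by auto
  have bdd: "bdd_below (?f ` ?A)" using nn by (auto intro: bdd_belowI[of _ 0])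
  have le1: "(INF p\<in>?A. ?f p) \<ge> 0" using ne nn by (intro cINF_greatest) auto
  have le2: "(INF p\<in>?A. ?f p) \<le> 0 + ep" if epp: "ep > 0" for ep
  proof -
    obtain p where "p \<in> ?A" "?f p < ep" using small[OF epp] by blast
    then show ?thesis using cINF_lower[OF bdd, of p] by linarith
  qed
  have "(INF p\<in>?A. ?f p) \<le> 0" by (rule field_le_epsilon) (rule le2)
  then show ?thesis using le1 by linarith
qed




lemma core_D0: "core SW D0 = C0"
proof
  show "core SW D0 \<subseteq> C0" using core_sub by (rule subsetI)
  show "C0 \<subseteq> core SW D0"
  proof
    fix x assume "x \<in> C0"
    then obtain w where "w \<in> Iset" "x = proj w" by (auto simp: C0_def interior_W)
    then show "x \<in> core SW D0" using core_sup by simp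
  qed
qed

theorem mainTheorem6:
  shows "(\<exists>!D. invariant_control_set SW D)
    \<and> (\<forall>D. invariant_control_set SW D \<longrightarrow> core SW D = C0)
    \<and> (\<forall>g\<in>SW. norm (g *v e1) \<ge> 1/2)
    \<and> (\<forall>z. z \<noteq> 0 \<and> proj z \<in> C0 \<longrightarrow>
         (\<exists>h\<in>SW. proj z = act h (proj e1) \<and>
              (\<forall>g\<in>SW. rho g z \<ge> 1 / (2 * onorm (\<lambda>x. h *v x))))
         \<and> (INF g\<in>SW. rho g z) > 0)
    \<and> (INF p\<in>SW \<times> {z. z \<noteq> 0 \<and> proj z \<in> C0}. rho (fst p) (snd p)) = 0"
proof (intro conjI)
  show "\<exists>!D. invariant_control_set SW D" by (rule ex1_ics)
  show "\<forall>D. invariant_control_set SW D \<longrightarrow> core SW D = C0"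
  proof (intro allI impI)
    fix D assume "invariant_control_set SW D"
    then have "D = D0" using ics_iff by simp
    then show "core SW D = C0" using core_D0 by simp
  qed
  show "\<forall>g\<in>SW. norm (g *v e1) \<ge> 1/2" by (intro ballI SW_e1)
  show "\<forall>z. z \<noteq> 0 \<and> proj z \<in> C0 \<longrightarrow>
         (\<exists>h\<in>SW. proj z = act h (proj e1) \<and>
              (\<forall>g\<in>SW. rho g z \<ge> 1 / (2 * onorm (\<lambda>x. h *v x))))
         \<and> (INF g\<in>SW. rho g z) > 0"
  proof (intro allI impI)
    fix z :: "real^2" assume a: "z \<noteq> 0 \<and> proj z \<in> C0"
    show "(\<exists>h\<in>SW. proj z = act h (proj e1) \<and>
              (\<forall>g\<in>SW. rho g z \<ge> 1 / (2 * onorm (\<lambda>x. h *v x))))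
         \<and> (INF g\<in>SW. rho g z) > 0" using part2[OF conjunct1[OF a] conjunct2[OF a]] .
  qed
  show "(INF p\<in>SW \<times> {z. z \<noteq> 0 \<and> proj z \<in> C0}. rho (fst p) (snd p)) = 0" by (rule part3)
qed



end
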